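(* Let $i\in I$ and suppose there is $k\in I$ with $C_{k,i}<-1$. Then for every $w\in W$ the monomial $Y_{w(\omega_i),1}:=T_w(Y_{i,1})$ is a Laurent monomial in the elements $W_{j,b}$, $j\in I$, $b\in\mathbb{C}^\times$.
   Context: Let $\mathfrak{g}$ be a finite-dimensional simple complex Lie algebra with Dynkin index set $I$, Cartan matrix $C=(C_{i,j})$, symmetrizing integers $d_i$ (relatively prime, $(d_iC_{i,j})$ symmetric), lacing number $d=\max_i d_i$, fundamental weights $\omega_i$ and Weyl group $W$. Fix $q\in\mathbb{C}^\times$ not a root of unity, $q_i=q^{d_i}$. Let $\mathcal{Y}=\mathbb{Z}[Y_{i,a}^{\pm1}]_{i\in I,a\in\mathbb{C}^\times}$ and $A_{i,a}=Y_{i,aq_i^{-1}}Y_{i,aq_i}\big(\prod_{C_{j,i}=-1}Y_{j,a}\prod_{C_{j,i}=-2}Y_{j,aq^{-1}}Y_{j,aq}\prod_{C_{j,i}=-3}Y_{j,aq^{-2}}Y_{j,a}Y_{j,aq^2}\big)^{-1}$. Chari operators: ring automorphisms $T_i$ of $\mathcal{Y}$ with $T_i(Y_{i,a})=Y_{i,a}A_{i,aq_i}^{-1}$, $T_i(Y_{j,a})=Y_{j,a}$ ($j\ne i$); they satisfy the braid relations and $T_w:=T_{i_1}\cdots T_{i_k}$ for a reduced decomposition $w=s_{i_1}\cdots s_{i_k}$. $W_{j,b}$ denotes $Y_{j,b}$ if $d_j=d$, $Y_{j,bq^{-1}}Y_{j,bq}$ if $d_j=d-1$, $Y_{j,bq^{-2}}Y_{j,b}Y_{j,bq^2}$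 if $d_j=d-2$. *)

theory Defs
  imports Complex_Main "HOL-Library.Poly_Mapping"
begin

text \<open>A matrix is the Cartan matrix of a finite-dimensional
 simple Lie algebra iff it is an indecomposable generalized Cartan matrix which is
 symmetrizable with positive definite symmetrization (finite type).\<close>

definition simple_cartan :: "('i::finite \<Rightarrow> 'i \<Rightarrow> int) \<Rightarrow> ('i \<Rightarrow> nat) \<Rightarrow> bool" where
  "simple_cartan C d \<longleftrightarrow>
     (\<forall>i. C i i = 2) \<and>
     (\<forall>i j. i \<noteq> j \<longrightarrow> C i j \<le> 0) \<and>
     (\<forall>i j. C i j = 0 \<longleftrightarrow> C j i = 0) \<and>
     (\<forall>i. 0 < d i) \<and>
     (\<forall>i j. int (d i) * C i j = int (d j) * C j i) \<and>
     Gcd (range d) = 1 \<and>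
     (\<forall>x :: 'i \<Rightarrow> real. (\<exists>i. x i \<noteq> 0) \<longrightarrow>
        (\<Sum>i\<in>UNIV. \<Sum>j\<in>UNIV. real_of_int (int (d i) * C i j) * x i * x j) > 0) \<and>
     (\<forall>J :: 'i set. J \<noteq> {} \<and> J \<noteq> UNIV \<longrightarrow> (\<exists>j\<in>J. \<exists>k. k \<notin> J \<and> C j k \<noteq> 0))"

definition lacing :: "('i::finite \<Rightarrow> nat) \<Rightarrow> nat" where
  "lacing d = Max (range d)"

text \<open>alpha_j = sum_k C k j omega_k;  s_j lambda = lambda - lambda_j alpha_j.\<close>
definition srefl :: "('i \<Rightarrow> 'i \<Rightarrow> int) \<Rightarrow> 'i \<Rightarrow> ('i \<Rightarrow> int) \<Rightarrow> ('i \<Rightarrow> int)" where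
  "srefl C j lam = (\<lambda>k. lam k - lam j * C k j)"

definition weyl_word :: "('i \<Rightarrow> 'i \<Rightarrow> int) \<Rightarrow> 'i list \<Rightarrow> ('i \<Rightarrow> int) \<Rightarrow> ('i \<Rightarrow> int)" where
  "weyl_word C ws = foldr (\<lambda>j f. srefl C j \<circ> f) ws id"

definition weyl_group :: "('i \<Rightarrow> 'i \<Rightarrow> int) \<Rightarrow> (('i \<Rightarrow> int) \<Rightarrow> ('i \<Rightarrow> int)) set" where
  "weyl_group C = range (weyl_word C)"

definition reduced_decomp :: "('i \<Rightarrow> 'i \<Rightarrow> int) \<Rightarrow> (('i \<Rightarrow> int) \<Rightarrow> ('i \<Rightarrow> int)) \<Rightarrow> 'i list \<Rightarrow> bool" where
  "reduced_decomp C w ws \<longleftrightarrow> weyl_word C ws = w \<and>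
     (\<forall>vs. weyl_word C vs = w \<longrightarrow> length ws \<le> length vs)"

text \<open>A Laurent monomial in the variables Y_{i,a} is represented additively by its
 finitely supported exponent vector; multiplication of monomials is addition.\<close>
type_synonym 'i monom = "('i \<times> complex) \<Rightarrow>\<^sub>0 int"

definition Yv :: "'i \<Rightarrow> complex \<Rightarrow> 'i monom" where
  "Yv j a = frag_of (j, a)"

definition Am :: "('i::finite \<Rightarrow> 'i \<Rightarrow> int) \<Rightarrow> ('i \<Rightarrow> nat) \<Rightarrow> complex \<Rightarrow> 'i \<Rightarrow> complex \<Rightarrow> 'i monom" where
  "Am C d q i a =
     Yv i (a / q ^ d i) + Yv i (a * q ^ d i)
     - (\<Sum>j\<in>{j. C j i = -1}. Yv j a)
     - (\<Sum>j\<in>{j. C j i = -2}. Yv j (a / q) + Yv j (a * q))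
     - (\<Sum>j\<in>{j. C j i = -3}. Yv j (a / q^2) + Yv j a + Yv j (a * q^2))"

definition chariT :: "('i::finite \<Rightarrow> 'i \<Rightarrow> int) \<Rightarrow> ('i \<Rightarrow> nat) \<Rightarrow> complex \<Rightarrow> 'i \<Rightarrow> 'i monom \<Rightarrow> 'i monom" where
  "chariT C d q i = frag_extend (\<lambda>(j, a). if j = i then Yv i a - Am C d q i (a * q ^ d i) else Yv j a)"

definition chariT_word :: "('i::finite \<Rightarrow> 'i \<Rightarrow> int) \<Rightarrow> ('i \<Rightarrow> nat) \<Rightarrow> complex \<Rightarrow> 'i list \<Rightarrow> 'i monom \<Rightarrow> 'i monom" where
  "chariT_word C d q ws = foldr (\<lambda>j f. chariT C d q j \<circ> f) ws id"

definition Wv :: "('i::finite \<Rightarrow> nat) \<Rightarrow> complex \<Rightarrow> 'i \<Rightarrow> complex \<Rightarrow> 'i monom" where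
  "Wv d q j b =
     (if d j = lacing d then Yv j b
      else if d j + 1 = lacing d then Yv j (b / q) + Yv j (b * q)
      else if d j + 2 = lacing d then Yv j (b / q^2) + Yv j b + Yv j (b * q^2)
      else 0)"

definition laurent_in_W :: "('i::finite \<Rightarrow> nat) \<Rightarrow> complex \<Rightarrow> 'i monom \<Rightarrow> bool" where
  "laurent_in_W d q m \<longleftrightarrow> (\<exists>e :: ('i \<times> complex) \<Rightarrow>\<^sub>0 int. m = frag_extend (\<lambda>(j, b). Wv d q j b) e)"

end

theory Submission
  imports Defs
begin


definition LW :: "('i::finite \<Rightarrow> nat) \<Rightarrow> complex \<Rightarrow> 'i monom set" where
  "LW d q = {m. laurent_in_W d q m}"

lemma LW_Wv: "Wv d q j b \<in> LW d q"
  unfolding LW_def laurent_in_W_def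
  by (rule CollectI, rule exI[of _ "frag_of (j,b)"]) simp

lemma LW_0: "0 \<in> LW d q"
  unfolding LW_def laurent_in_W_def by (auto intro: exI[of _ 0])

lemma LW_diff: "a \<in> LW d q \<Longrightarrow> b \<in> LW d q \<Longrightarrow> a - b \<in> LW d q"
  unfolding LW_def laurent_in_W_def
  by (auto simp: frag_extend_diff[symmetric])

lemma LW_neg: "a \<in> LW d q \<Longrightarrow> - a \<in> LW d q"
  using LW_diff[OF LW_0] by fastforce

lemma LW_add: "a \<in> LW d q \<Longrightarrow> b \<in> LW d q \<Longrightarrow> a + b \<in> LW d q"
  using LW_diff[OF _ LW_neg] by fastforce

lemma LW_sum: "(\<And>x. x \<in> S \<Longrightarrow> f x \<in> LW d q) \<Longrightarrow> sum f S \<in> LW d q"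
  by (induction S rule: infinite_finite_induct) (auto intro: LW_0 LW_add)

lemma LW_extend: "(\<And>x. g x \<in> LW d q) \<Longrightarrow> frag_extend g c \<in> LW d q"
  using subset_UNIV
  by (induction c rule: frag_induction) (auto simp: frag_extend_diff intro: LW_0 LW_diff)

lemma chariT_extend: "chariT C d q j (frag_extend g c) = frag_extend (chariT C d q j \<circ> g) c"
  using subset_UNIV
  by (induction c rule: frag_induction) (auto simp: frag_extend_diff chariT_def)

lemma chariT_Yv: "chariT C d q j (Yv k a) = (if k = j then Yv j a - Am C d q j (a * q ^ d j) else Yv k a)"
  by (simp add: chariT_def Yv_def)

lemma chariT_diff: "chariT C d q j (a - b) = chariT C d q j a - chariT C d q j b"
  by (simp add: chariT_def frag_extend_diff)
lemma chariT_add: "chariT C d q j (a + b) = chariT C d q j a + chariT C d q j b"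
  by (simp add: chariT_def frag_extend_add)
lemma chariT_0: "chariT C d q j 0 = 0"
  by (simp add: chariT_def)

lemma chariT_other: "k \<noteq> j \<Longrightarrow> chariT C d q j (Wv d q k b) = Wv d q k b"
  by (simp add: Wv_def chariT_add chariT_Yv chariT_0)

lemma LW_closed:
  assumes "\<And>k b. chariT C d q j (Wv d q k b) \<in> LW d q" and "m \<in> LW d q"
  shows "chariT C d q j m \<in> LW d q"
proof -
  obtain e where "m = frag_extend (\<lambda>(j, b). Wv d q j b) e" using assms(2) by (auto simp: LW_def laurent_in_W_def)
  then show ?thesis by (auto simp: chariT_extend intro!: LW_extend assms(1))
qed



context
  fixes C :: "'i::finite \<Rightarrow> 'i \<Rightarrow> int" and d :: "'i \<Rightarrow> nat" and q :: complex and D :: nat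
  assumes D: "D = lacing d" and q0: "q \<noteq> 0"
    and vals: "\<forall>v. d v = 1 \<or> d v = D" and D23: "D = 2 \<or> D = 3"
    and diag: "\<forall>v. C v v = 2" and offd: "\<forall>u v. u \<noteq> v \<longrightarrow> C u v \<le> 0"
    and zs: "\<forall>u v. C u v = 0 \<longleftrightarrow> C v u = 0"
    and sym: "\<forall>u v. int (d u) * C u v = int (d v) * C v u"
    and prod: "\<forall>u v. u \<noteq> v \<longrightarrow> C u v * C v u < 4"
begin

lemma nbneg: assumes "C k j < 0" shows "C j k \<le> -1" "k \<noteq> j"
proof -
  show kj: "k \<noteq> j" using diag assms by force
  have "C j k \<noteq> 0" using zs[rule_format, of k j] assms by auto
  moreover have "C j k \<le> 0" using offd kj by auto
  ultimately show "C j k \<le> -1" by linarith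
qed

lemma nb1: assumes "d j = D" "C k j = -1" shows "d k = D"
proof -
  have c: "C j k \<le> -1" using nbneg[of k j] assms by auto
  have "int (d j) * C j k = - int (d k)" using sym assms by (metis mult_minus1_right)
  hence e: "int (d k) = int D * (- C j k)" using assms by simp
  have "int D * 1 \<le> int D * (- C j k)" by (rule mult_left_mono) (use c in auto)
  hence "int D \<le> int (d k)" using e by simp
  hence "D \<le> d k" by simp
  thus ?thesis using vals[rule_format, of k] D23 by auto
qed

lemma nb23: assumes "d j = D" "C k j = - int n" "n = 2 \<or> n = 3" shows "d k = 1 \<and> D = n"
proof -
  have c: "C j k \<le> -1" "k \<noteq> j" using nbneg[of k j] assms by auto
  have "C j k * C k j < 4" using prod c by auto
  hence "C j k * (- int n) < 4" using assms by simp
  hence c1: "C j k = -1" using c assms(3) by auto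
  have "int (d j) * C j k = int (d k) * C k j" using sym by auto
  hence "int D = int n * int (d k)" using assms c1 by simp
  hence e: "D = n * d k" by (metis of_nat_mult of_nat_eq_iff)
  have "d k \<noteq> D"
  proof
    assume "d k = D"
    hence "D * 1 = D * n" using e by simp
    hence "n = 1" using D23 by (metis mult_cancel1 zero_neq_numeral)
    thus False using assms(3) by simp
  qed
  hence "d k = 1" using vals by auto
  thus ?thesis using e by simp
qed

lemma nbs: assumes "d j = 1" "C k j \<le> -2" shows False
proof -
  have c: "C j k \<le> -1" "k \<noteq> j" using nbneg[of k j] assms by auto
  have "int (d j) * C j k = int (d k) * C k j" using sym by auto
  hence e: "C j k = int (d k) * C k j" using assms by simp
  have "d k \<ge> 1" using vals D23 by (metis one_le_numeral order_refl)
  hence "int (d k) * C k j \<le> 1 * C k j" using assms by (intro mult_right_mono_neg) auto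
  hence "C j k \<le> -2" using e assms by linarith
  hence "2 * 2 \<le> (- C j k) * (- C k j)" using assms by (intro mult_mono) auto
  hence "C j k * C k j \<ge> 4" by simp
  moreover have "C j k * C k j < 4" using prod c(2) by auto
  ultimately show False by linarith
qed

lemma Wv_D: "d k = D \<Longrightarrow> Wv d q k x = Yv k x"
  using D by (simp add: Wv_def)
lemma Wv_1_2: "d k = 1 \<Longrightarrow> D = 2 \<Longrightarrow> Wv d q k x = Yv k (x / q) + Yv k (x * q)"
  using D by (simp add: Wv_def)
lemma Wv_1_3: "d k = 1 \<Longrightarrow> D = 3 \<Longrightarrow> Wv d q k x = Yv k (x / q^2) + Yv k x + Yv k (x * q^2)"
  using D by (simp add: Wv_def)

lemma Am_D: assumes "d j = D" shows "Am C d q j a \<in> LW d q"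
proof -
  have s1: "(\<Sum>k\<in>{k. C k j = -1}. Yv k a) \<in> LW d q"
    by (rule LW_sum) (metis (mono_tags) LW_Wv Wv_D nb1 assms mem_Collect_eq)
  have s2: "(\<Sum>k\<in>{k. C k j = -2}. Yv k (a / q) + Yv k (a * q)) \<in> LW d q"
  proof (rule LW_sum)
    fix k assume "k \<in> {k. C k j = -2}"
    hence "d k = 1 \<and> D = 2" using nb23[of j k 2] assms by auto
    thus "Yv k (a / q) + Yv k (a * q) \<in> LW d q" using Wv_1_2 LW_Wv by metis
  qed
  have s3: "(\<Sum>k\<in>{k. C k j = -3}. Yv k (a / q^2) + Yv k a + Yv k (a * q^2)) \<in> LW d q"
  proof (rule LW_sum)
    fix k assume "k \<in> {k. C k j = -3}"
    hence "d k = 1 \<and> D = 3" using nb23[of j k 3] assms by auto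
    thus "Yv k (a / q^2) + Yv k a + Yv k (a * q^2) \<in> LW d q" using Wv_1_3 LW_Wv by metis
  qed
  have y: "Yv j x \<in> LW d q" for x using Wv_D[OF assms] LW_Wv by metis
  show ?thesis unfolding Am_def
    by (intro LW_diff LW_add y s1 s2 s3)
qed

lemma step: "chariT C d q j (Wv d q k b) \<in> LW d q"
proof (cases "k = j")
  case False
  then show ?thesis using chariT_other LW_Wv by metis
next
  case True
  note kj = True
  show ?thesis
  proof (cases "d j = D")
    case True
    then show ?thesis using kj Wv_D[OF True] chariT_Yv Am_D[OF True] LW_diff LW_Wv by metis
  next
    case False
    hence dj: "d j = 1" using vals by auto
    define N where "N x = (\<Sum>k\<in>{k. C k j = -1}. Yv k x)" for x
    have e2a: "{k. C k j = -2} = {}"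
    proof -
      { fix k assume "C k j = -2" hence False using nbs[OF dj, of k] by simp }
      thus ?thesis by auto
    qed
    have e2b: "{k. C k j = -3} = {}"
    proof -
      { fix k assume "C k j = -3" hence False using nbs[OF dj, of k] by simp }
      thus ?thesis by auto
    qed
    note e2 = e2a e2b
    have A: "Am C d q j x = Yv j (x/q) + Yv j (x*q) - N x" for x
      unfolding Am_def N_def e2 using dj by simp
    have cY: "chariT C d q j (Yv j x) = Yv j x - Am C d q j (x * q)" for x
      by (simp add: chariT_Yv dj)
    have nk: "d k = 1 \<or> d k = D" for k using vals by auto
    show ?thesis
    proof (cases "D = 2")
      case D2: True
      have W: "Wv d q j x = Yv j (x / q) + Yv j (x * q)" for x using Wv_1_2[OF dj D2] .
      have a1: "b / q * q = b" using q0 by simp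
      have a2: "b * q * q / q = b * q" using q0 by simp
      have "chariT C d q j (Wv d q j b) = N b + N (b*q*q) - Wv d q j (b * q * q)"
        unfolding W chariT_add cY a1 A a2 by (simp add: algebra_simps)
      moreover have "N b + N (b*q*q) \<in> LW d q"
        unfolding N_def sum.distrib[symmetric]
      proof (rule LW_sum)
        fix k assume "k \<in> {k. C k j = -1}"
        show "Yv k b + Yv k (b * q * q) \<in> LW d q"
        proof (cases "d k = 1")
          case True
          have "Wv d q k (b * q) = Yv k b + Yv k (b * q * q)" using Wv_1_2[OF True D2] q0 by simp
          then show ?thesis using LW_Wv by metis
        next
          case False
          then show ?thesis using nk[of k] Wv_D LW_Wv LW_add by metis
        qed
      qed
      ultimately show ?thesis using LW_diff LW_Wv kj by metis
    next
      case D3: False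
      hence D3: "D = 3" using D23 by auto
      have W: "Wv d q j x = Yv j (x / q^2) + Yv j x + Yv j (x * q^2)" for x using Wv_1_3[OF dj D3] .
      have a1: "b / q^2 * q = b / q" using q0 by (simp add: power2_eq_square)
      have a2: "b / q / q = b / q^2" "b / q * q = b" "b * q / q = b" "b * q * q = b * q^2"
        "b * q^2 * q / q = b * q^2" "b * q^2 * q * q = b * q^2 * q^2" "b * q ^ 2 / q ^ 2 = b"
        using q0 by (simp_all add: power2_eq_square)
      have "chariT C d q j (Wv d q j b) = N (b/q) + N (b*q) + N (b*q^2*q) - Wv d q j (b * q^2)"
        unfolding W chariT_add cY a1 A a2 by (simp add: algebra_simps)
      moreover have "N (b/q) + N (b*q) + N (b*q^2*q) \<in> LW d q"
        unfolding N_def sum.distrib[symmetric]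
      proof (rule LW_sum)
        fix k assume "k \<in> {k. C k j = -1}"
        show "Yv k (b/q) + Yv k (b * q) + Yv k (b*q^2*q) \<in> LW d q"
        proof (cases "d k = 1")
          case True
          have "b * q / q^2 = b / q" "b * q * q^2 = b * q^2 * q" using q0 by (simp_all add: power2_eq_square)
          hence "Wv d q k (b * q) = Yv k (b/q) + Yv k (b * q) + Yv k (b*q^2*q)" using Wv_1_3[OF True D3] by (simp add: mult_ac)
          then show ?thesis using LW_Wv by metis
        next
          case False
          then show ?thesis using nk[of k] Wv_D LW_Wv LW_add by metis
        qed
      qed
      ultimately show ?thesis using LW_diff LW_Wv kj by metis
    qed
  qed
qed

lemma word_closed: "m \<in> LW d q \<Longrightarrow> chariT_word C d q ws m \<in> LW d q"
  by (induction ws) (auto simp: chariT_word_def intro: LW_closed step)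

end


definition Qf :: "('i::finite \<Rightarrow> 'i \<Rightarrow> int) \<Rightarrow> ('i \<Rightarrow> nat) \<Rightarrow> ('i \<Rightarrow> real) \<Rightarrow> real" where
  "Qf C d x = (\<Sum>i\<in>UNIV. \<Sum>j\<in>UNIV. real_of_int (int (d i) * C i j) * x i * x j)"

lemma Qf_pos: "simple_cartan C d \<Longrightarrow> x u \<noteq> 0 \<Longrightarrow> Qf C d x > 0"
  unfolding simple_cartan_def Qf_def by blast

lemma Qf_rows: "Qf C d x = (\<Sum>i\<in>UNIV. x i * (\<Sum>j\<in>UNIV. real (d i) * real_of_int (C i j) * x j))"
  unfolding Qf_def by (simp add: sum_distrib_left mult_ac)

lemma row_bound:
  fixes C :: "'i::finite \<Rightarrow> 'i \<Rightarrow> int"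
  assumes "N \<subseteq> UNIV" "\<And>j. j \<notin> N \<Longrightarrow> real (d i) * real_of_int (C i j) * x j \<le> 0"
  shows "(\<Sum>j\<in>UNIV. real (d i) * real_of_int (C i j) * x j) \<le> (\<Sum>j\<in>N. real (d i) * real_of_int (C i j) * x j)"
proof -
  have "(\<Sum>j\<in>UNIV. real (d i) * real_of_int (C i j) * x j) = (\<Sum>j\<in>N. real (d i) * real_of_int (C i j) * x j) + (\<Sum>j\<in>UNIV - N. real (d i) * real_of_int (C i j) * x j)"
    by (metis (no_types, lifting) Diff_partition add.commute assms(1) finite sum.subset_diff)
  moreover have "(\<Sum>j\<in>UNIV - N. real (d i) * real_of_int (C i j) * x j) \<le> 0"
    by (rule sum_nonpos) (use assms(2) in auto)
  ultimately show ?thesis by linarith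
qed

context
  fixes C :: "'i::finite \<Rightarrow> 'i \<Rightarrow> int" and d :: "'i \<Rightarrow> nat"
  assumes sc: "simple_cartan C d"
begin

lemma diag: "C v v = 2" using sc by (simp add: simple_cartan_def)
lemma offd: "u \<noteq> v \<Longrightarrow> C u v \<le> 0" using sc by (simp add: simple_cartan_def)
lemma zs: "C u v = 0 \<longleftrightarrow> C v u = 0" using sc by (simp add: simple_cartan_def)
lemma dpos: "0 < d v" using sc by (simp add: simple_cartan_def)
lemma sym: "int (d u) * C u v = int (d v) * C v u" using sc by (simp add: simple_cartan_def)
lemma symr: "real (d u) * real_of_int (C u v) = real (d v) * real_of_int (C v u)"
  using sym[of u v] by (metis of_int_mult of_int_of_nat_eq)

lemma prod4: assumes uv: "u \<noteq> v" shows "C u v * C v u < 4"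
proof (rule ccontr)
  assume "\<not> ?thesis"
  hence P: "real_of_int (C u v * C v u) \<ge> 4" by linarith
  define s where "s = real (d u) * real_of_int (C u v)"
  define a where "a = 2 * real (d v)"
  define b where "b = - s"
  define x where "x w = (if w = u then a else if w = v then b else 0)" for w
  have a0: "a > 0" using dpos[of v] by (simp add: a_def)
  have "Qf C d x > 0" by (rule Qf_pos[OF sc, of x u]) (use a0 in \<open>simp add: x_def\<close>)
  moreover have "Qf C d x \<le> 0"
  proof -
    have "Qf C d x = (\<Sum>i\<in>UNIV. x i * (\<Sum>j\<in>UNIV. real (d i) * real_of_int (C i j) * x j))" by (rule Qf_rows)
    also have "\<dots> = (\<Sum>i\<in>{u,v}. x i * (\<Sum>j\<in>{u,v}. real (d i) * real_of_int (C i j) * x j))"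
    proof -
      have r: "(\<Sum>j\<in>UNIV. real (d i) * real_of_int (C i j) * x j) = (\<Sum>j\<in>{u,v}. real (d i) * real_of_int (C i j) * x j)" for i
        by (rule sum.mono_neutral_right) (auto simp: x_def)
      show ?thesis unfolding r by (rule sum.mono_neutral_right) (auto simp: x_def)
    qed
    also have "\<dots> = 2 * real (d u) * a * a + 2 * s * a * b + 2 * real (d v) * b * b"
      using uv symr[of v u] by (simp add: x_def diag s_def algebra_simps)
    also have "\<dots> = 2 * real (d v) * (4 * real (d u) * real (d v) - s * s)"
      by (simp add: a_def b_def algebra_simps)
    also have "s * s = real (d u) * real (d v) * real_of_int (C u v * C v u)"
      using symr[of u v] by (simp add: s_def algebra_simps)
    also have "2 * real (d v) * (4 * real (d u) * real (d v) - real (d u) * real (d v) * real_of_int (C u v * C v u)) \<le> 0"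
    proof -
      have "0 \<le> real (d u) * real (d v)" by simp
      hence "4 * (real (d u) * real (d v)) \<le> real_of_int (C u v * C v u) * (real (d u) * real (d v))"
        using P by (intro mult_right_mono) auto
      thus ?thesis by (intro mult_nonneg_nonpos) (auto simp: algebra_simps)
    qed
    finally show ?thesis .
  qed
  ultimately show False by simp
qed

lemma simple_edge: assumes "u \<noteq> v" "C u v \<noteq> 0" "d u = d v" shows "C u v = -1" "C v u = -1"
proof -
  have e: "C u v = C v u" using sym[of u v] assms(3) dpos[of u] by simp
  have "C u v \<le> -1" using offd[OF assms(1)] assms(2) by linarith
  moreover have "C u v * C v u < 4" by (rule prod4[OF assms(1)])
  moreover have "C u v \<le> -2 \<Longrightarrow> 2 * 2 \<le> (- C u v) * (- C v u)" using e by (intro mult_mono) auto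
  ultimately show "C u v = -1" using e by fastforce
  thus "C v u = -1" using e by simp
qed

lemma mult_edge: assumes "u \<noteq> v" "C u v \<noteq> 0" "d u \<noteq> d v" shows "C u v * C v u \<ge> 2"
proof -
  have a: "C u v \<le> -1" using offd[OF assms(1)] assms(2) by linarith
  have b: "C v u \<le> -1" using offd assms(1,2) zs by (metis order_antisym_conv zle_diff1_eq diff_0 not_le)
  show ?thesis
  proof (cases "C u v = -1")
    case True
    have "C v u \<noteq> -1"
    proof
      assume "C v u = -1"
      hence "int (d u) = int (d v)" using sym[of u v] True by simp
      thus False using assms(3) by simp
    qed
    thus ?thesis using True b by simp
  next
    case False
    hence "2 * 1 \<le> (- C u v) * (- C v u)" using a b by (intro mult_mono) auto
    thus ?thesis by simp
  qed
qed

lemma path_cert: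
  fixes p :: "nat \<Rightarrow> 'i" and m :: nat
  defines "n \<equiv> Suc (Suc m)"
  assumes inj: "inj_on p {..n}"
    and walk: "\<And>t. t < n \<Longrightarrow> C (p t) (p (Suc t)) \<noteq> 0"
    and m0: "d (p 0) \<noteq> d (p 1)" and mn: "d (p (Suc m)) \<noteq> d (p n)"
    and simp_int: "\<And>t. 1 \<le> t \<Longrightarrow> t + 2 \<le> n \<Longrightarrow> d (p t) = d (p (Suc t))"
  shows False
proof -
  define \<delta> where "\<delta> = real (d (p 1))"
  have dint: "d (p t) = d (p 1)" if "1 \<le> t" "t \<le> Suc m" for t
    using that
  proof (induction t)
    case 0 then show ?case by simp
  next
    case (Suc t)
    show ?case
    proof (cases "t = 0")
      case True then show ?thesis by simp
    next
      case False
      hence "d (p t) = d (p 1)" using Suc by auto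
      moreover have "d (p t) = d (p (Suc t))" using simp_int[of t] False Suc.prems by (simp add: n_def)
      ultimately show ?thesis by simp
    qed
  qed
  have neq: "p t \<noteq> p t'" if "t \<le> n" "t' \<le> n" "t \<noteq> t'" for t t'
    using inj that by (auto dest: inj_onD)
  have Cint: "C (p t) (p (Suc t)) = -1 \<and> C (p (Suc t)) (p t) = -1" if "1 \<le> t" "t + 2 \<le> n" for t
    using simple_edge[of "p t" "p (Suc t)"] neq[of t "Suc t"] walk[of t] simp_int[OF that] that by auto
  define b0 where "b0 = - real (d (p 0)) * real_of_int (C (p 0) (p 1))"
  define b1 where "b1 = - real (d (p n)) * real_of_int (C (p n) (p (Suc m)))"
  have b0': "b0 = - \<delta> * real_of_int (C (p 1) (p 0))" using symr[of "p 0" "p 1"] by (simp add: b0_def \<delta>_def)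
  have b1': "b1 = - \<delta> * real_of_int (C (p (Suc m)) (p n))"
    using symr[of "p n" "p (Suc m)"] dint[of "Suc m"] by (simp add: b1_def \<delta>_def)
  have d0: "real (d (p 0)) > 0" "real (d (p n)) > 0" "\<delta> > 0" using dpos by (auto simp: \<delta>_def)
  have P0i: "C (p 0) (p 1) * C (p 1) (p 0) \<ge> 2"
    using mult_edge[of "p 0" "p 1"] neq[of 0 1] walk[of 0] m0 by (simp add: n_def)
  have Pni: "C (p n) (p (Suc m)) * C (p (Suc m)) (p n) \<ge> 2"
    using mult_edge[of "p n" "p (Suc m)"] neq[of n "Suc m"] walk[of "Suc m"] mn zs by (auto simp: n_def)
  have P0: "real_of_int (C (p 0) (p 1)) * real_of_int (C (p 1) (p 0)) \<ge> 2"
    using P0i by (metis of_int_le_iff of_int_mult of_int_numeral)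
  have Pn: "real_of_int (C (p n) (p (Suc m))) * real_of_int (C (p (Suc m)) (p n)) \<ge> 2"
    using Pni by (metis of_int_le_iff of_int_mult of_int_numeral)
  have c01: "C (p 0) (p 1) < 0" using offd[of "p 0" "p 1"] neq[of 0 1] walk[of 0] by (force simp: n_def)
  have cn: "C (p n) (p (Suc m)) < 0" using offd[of "p n" "p (Suc m)"] neq[of n "Suc m"] walk[of "Suc m"] zs by (force simp: n_def)
  have b0p: "b0 > 0" using c01 d0 by (simp add: b0_def mult_pos_neg)
  have b1p: "b1 > 0" using cn d0 by (simp add: b1_def mult_pos_neg)
  define s where "s = b0 / (2 * real (d (p 0)))"
  define u where "u = b1 / (2 * real (d (p n)))"
  define c where "c t = (if t = 0 then s else if t = n then u else 1)" for t
  define x where "x w = (if w \<in> p ` {..n} then c (the_inv_into {..n} p w) else 0)" for w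
  have xp: "x (p t) = c t" if "t \<le> n" for t
    using that inj by (simp add: x_def the_inv_into_f_f)
  have spos: "s > 0" "u > 0" using b0p b1p d0 by (auto simp: s_def u_def)
  have cpos: "c t \<ge> 0" for t using spos by (simp add: c_def)
  have xpos: "x w \<ge> 0" for w using cpos by (simp add: x_def)
  define R where "R v = (\<Sum>j\<in>UNIV. real (d v) * real_of_int (C v j) * x j)" for v
  define e where "e t t' = real (d (p t)) * real_of_int (C (p t) (p t')) * c t'" for t t'
  define nb where "nb t = (if t = 0 then {0, 1} else if t = n then {n, Suc m} else {t - 1, t, Suc t})" for t
  have nbsub: "nb t \<subseteq> {..n}" if "t \<le> n" for t using that by (auto simp: nb_def n_def)
  have Rb: "R (p t) \<le> (\<Sum>t'\<in>nb t. e t t')" if "t \<le> n" for t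
  proof -
    have "R (p t) \<le> (\<Sum>j\<in>p ` nb t. real (d (p t)) * real_of_int (C (p t) j) * x j)"
      unfolding R_def
    proof (rule row_bound)
      fix j assume "j \<notin> p ` nb t"
      hence "j \<noteq> p t" by (auto simp: nb_def)
      hence "C (p t) j \<le> 0" using offd[of "p t" j] by auto
      thus "real (d (p t)) * real_of_int (C (p t) j) * x j \<le> 0"
        using xpos[of j] by (simp add: mult_nonpos_nonneg mult_nonneg_nonpos)
    qed auto
    also have "\<dots> = (\<Sum>t'\<in>nb t. e t t')"
    proof (subst sum.reindex)
      show "inj_on p (nb t)" using inj_on_subset[OF inj nbsub[OF that]] .
      show "(\<Sum>t'\<in>nb t. ((\<lambda>j. real (d (p t)) * real_of_int (C (p t) j) * x j) \<circ> p) t') = sum (e t) (nb t)"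
        by (rule sum.cong) (use nbsub[OF that] in \<open>auto simp: e_def xp\<close>)
    qed
    finally show ?thesis .
  qed
  have "Qf C d x = (\<Sum>v\<in>UNIV. x v * R v)" unfolding Qf_rows R_def ..
  also have "\<dots> = (\<Sum>v\<in>p ` {..n}. x v * R v)"
    by (rule sum.mono_neutral_right) (auto simp: x_def)
  also have "\<dots> = (\<Sum>t\<le>n. c t * R (p t))"
    by (subst sum.reindex[OF inj]) (auto simp: xp intro!: sum.cong)
  also have "\<dots> \<le> (\<Sum>t\<le>n. c t * (\<Sum>t'\<in>nb t. e t t'))"
    by (rule sum_mono) (use Rb cpos in \<open>auto intro: mult_left_mono\<close>)
  also have "\<dots> \<le> 0"
  proof -
    define G where "G t = c t * (\<Sum>t'\<in>nb t. e t t')" for t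
    have sumG: "(\<Sum>t\<le>n. G t) = G 0 + (\<Sum>t\<le>m. G (Suc t)) + G n"
      unfolding n_def by (subst sum.atMost_Suc, subst sum.atMost_Suc_shift, simp)
    have dpr: "real (d (p t)) = \<delta>" if "1 \<le> t" "t \<le> Suc m" for t unfolding \<delta>_def using dint[OF that] by (simp only:)
    have c1: "c t = 1" if "1 \<le> t" "t \<le> Suc m" for t using that by (auto simp: c_def n_def)
    have G0: "G 0 = 2 * real (d (p 0)) * s * s - b0 * s"
      using neq[of 0 1] by (simp add: G_def nb_def e_def c_def n_def diag b0_def algebra_simps)
    have Gn: "G n = 2 * real (d (p n)) * u * u - b1 * u"
      using neq[of n "Suc m"] by (simp add: G_def nb_def e_def c_def n_def diag b1_def algebra_simps)
    have GS: "G (Suc t) = e (Suc t) t + e (Suc t) (Suc t) + e (Suc t) (Suc (Suc t))" if "t \<le> m" for t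
    proof -
      have nbS: "nb (Suc t) = {t, Suc t, Suc (Suc t)}" using that by (simp add: nb_def n_def)
      have "c (Suc t) = 1" using that by (simp add: c_def n_def)
      thus ?thesis by (simp add: G_def nbS)
    qed
    have mid: "(\<Sum>t\<le>m. G (Suc t)) = (\<Sum>t\<le>m. e (Suc t) t) + (\<Sum>t\<le>m. e (Suc t) (Suc t)) + (\<Sum>t\<le>m. e (Suc t) (Suc (Suc t)))"
    proof -
      have "(\<Sum>t\<le>m. G (Suc t)) = (\<Sum>t\<le>m. e (Suc t) t + e (Suc t) (Suc t) + e (Suc t) (Suc (Suc t)))"
        by (rule sum.cong) (simp_all add: GS)
      thus ?thesis by (simp add: sum.distrib)
    qed
    have m1: "(\<Sum>t\<le>m. e (Suc t) (Suc t)) = (\<Sum>t\<le>m. 2 * \<delta>)"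
      by (rule sum.cong) (auto simp: e_def diag c1 dpr)
    have m2: "(\<Sum>t\<le>m. e (Suc t) t) = - b0 * s + (\<Sum>t<m. - \<delta>)"
    proof -
      have "(\<Sum>t\<le>m. e (Suc t) t) = e 1 0 + (\<Sum>t<m. e (Suc (Suc t)) (Suc t))" by (simp add: sum.atMost_shift)
      moreover have "e 1 0 = - b0 * s" by (simp add: e_def c_def b0' dpr)
      moreover have "(\<Sum>t<m. e (Suc (Suc t)) (Suc t)) = (\<Sum>t<m. - \<delta>)"
      proof (rule sum.cong)
        fix t assume "t \<in> {..<m}"
        hence t: "t < m" by simp
        have "C (p (Suc (Suc t))) (p (Suc t)) = -1" using Cint[of "Suc t"] t by (simp add: n_def)
        thus "e (Suc (Suc t)) (Suc t) = - \<delta>" using t dpr[of "Suc (Suc t)"] c1[of "Suc t"] by (simp add: e_def)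
      qed simp
      ultimately show ?thesis by simp
    qed
    have m3: "(\<Sum>t\<le>m. e (Suc t) (Suc (Suc t))) = (\<Sum>t<m. - \<delta>) - b1 * u"
    proof -
      have "(\<Sum>t\<le>m. e (Suc t) (Suc (Suc t))) = (\<Sum>t<m. e (Suc t) (Suc (Suc t))) + e (Suc m) n"
        by (simp add: lessThan_Suc_atMost[symmetric] n_def)
      moreover have "e (Suc m) n = - b1 * u" using dpr[of "Suc m"] by (simp add: e_def c_def b1' n_def)
      moreover have "(\<Sum>t<m. e (Suc t) (Suc (Suc t))) = (\<Sum>t<m. - \<delta>)"
      proof (rule sum.cong)
        fix t assume "t \<in> {..<m}"
        hence t: "t < m" by simp
        have "C (p (Suc t)) (p (Suc (Suc t))) = -1" using Cint[of "Suc t"] t by (simp add: n_def)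
        thus "e (Suc t) (Suc (Suc t)) = - \<delta>" using t dpr[of "Suc t"] c1[of "Suc (Suc t)"] by (simp add: e_def)
      qed simp
      ultimately show ?thesis by simp
    qed
    have tot: "(\<Sum>t\<le>n. G t) = (2 * real (d (p 0)) * s * s - 2 * b0 * s) + (2 * real (d (p n)) * u * u - 2 * b1 * u) + 2 * \<delta>"
      unfolding sumG mid m1 m2 m3 G0 Gn by (simp add: algebra_simps)
    have q0: "2 * real (d (p 0)) * s * s - 2 * b0 * s = - b0 * b0 / (2 * real (d (p 0)))"
      using d0 by (simp add: s_def field_simps power2_eq_square)
    have q1: "2 * real (d (p n)) * u * u - 2 * b1 * u = - b1 * b1 / (2 * real (d (p n)))"
      using d0 by (simp add: u_def field_simps power2_eq_square)
    have bb0: "b0 * b0 = real (d (p 0)) * \<delta> * (real_of_int (C (p 0) (p 1)) * real_of_int (C (p 1) (p 0)))"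
      by (subst (2) b0') (simp add: b0_def algebra_simps)
    have bb1: "b1 * b1 = real (d (p n)) * \<delta> * (real_of_int (C (p n) (p (Suc m))) * real_of_int (C (p (Suc m)) (p n)))"
      by (subst (2) b1') (simp add: b1_def algebra_simps)
    have "b0 * b0 / (2 * real (d (p 0))) \<ge> \<delta>"
    proof -
      have "real (d (p 0)) * \<delta> * 2 \<le> real (d (p 0)) * \<delta> * (real_of_int (C (p 0) (p 1)) * real_of_int (C (p 1) (p 0)))"
        using P0 d0 by (intro mult_left_mono) auto
      thus ?thesis using d0 unfolding bb0 by (simp add: field_simps)
    qed
    moreover have "b1 * b1 / (2 * real (d (p n))) \<ge> \<delta>"
    proof -
      have "real (d (p n)) * \<delta> * 2 \<le> real (d (p n)) * \<delta> * (real_of_int (C (p n) (p (Suc m))) * real_of_int (C (p (Suc m)) (p n)))"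
        using Pn d0 by (intro mult_left_mono) auto
      thus ?thesis using d0 unfolding bb1 by (simp add: field_simps)
    qed
    ultimately have "(\<Sum>t\<le>n. G t) \<le> 0" unfolding tot q0 q1 by simp
    thus ?thesis by (simp add: G_def)
  qed
  finally have "Qf C d x \<le> 0" .
  moreover have "Qf C d x > 0" using Qf_pos[OF sc, of x "p 0"] xp[of 0] spos by (simp add: c_def)
  ultimately show False by simp
qed

end


context
  fixes C :: "'i::finite \<Rightarrow> 'i \<Rightarrow> int" and d :: "'i \<Rightarrow> nat"
  assumes sc: "simple_cartan C d"
begin

definition "mulg u v \<longleftrightarrow> C u v \<noteq> 0 \<and> d u \<noteq> d v"
definition "wk p n \<longleftrightarrow> (\<forall>t<n. p t \<noteq> p (Suc t) \<and> C (p t) (p (Suc t)) \<noteq> 0)"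
definition "cfg p n \<longleftrightarrow> 2 \<le> n \<and> wk p n \<and> mulg (p 0) (p 1) \<and> mulg (p (n - 1)) (p n)
   \<and> {p 0, p 1} \<noteq> {p (n - 1), p n}"

lemma mulg_sym: "mulg u v \<Longrightarrow> mulg v u"
  using zs[OF sc] by (auto simp: mulg_def)
lemma mulg_neq: "mulg u v \<Longrightarrow> u \<noteq> v"
  by (auto simp: mulg_def)

lemma conn: "\<exists>p n. wk p n \<and> p 0 = u \<and> p n = v"
proof -
  define J where "J = {v. \<exists>p n. wk p n \<and> p 0 = u \<and> p n = v}"
  have uJ: "u \<in> J" unfolding J_def by (rule CollectI, rule exI[of _ "\<lambda>_. u"], rule exI[of _ 0]) (simp add: wk_def)
  have "J = UNIV"
  proof (rule ccontr)
    assume "J \<noteq> UNIV"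
    have cc: "\<forall>J :: 'i set. J \<noteq> {} \<and> J \<noteq> UNIV \<longrightarrow> (\<exists>j\<in>J. \<exists>k. k \<notin> J \<and> C j k \<noteq> 0)"
      using sc unfolding simple_cartan_def by (elim conjE) assumption
    from cc[rule_format, of J] uJ \<open>J \<noteq> UNIV\<close> obtain j k where jk: "j \<in> J" "k \<notin> J" "C j k \<noteq> 0"
      by blast
    from jk(1) obtain p n where p: "wk p n" "p 0 = u" "p n = j" by (auto simp: J_def)
    have "j \<noteq> k" using jk by auto
    hence "wk (p(Suc n := k)) (Suc n)" using p jk by (auto simp: wk_def less_Suc_eq)
    moreover have "(p(Suc n := k)) 0 = u" using p by simp
    ultimately have "k \<in> J" unfolding J_def by force
    with jk show False by simp
  qed
  hence "v \<in> J" by simp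
  thus ?thesis unfolding J_def by simp
qed

lemma cfg_exists:
  assumes "mulg a b" "mulg c e" "{a, b} \<noteq> {c, e}"
  shows "\<exists>p n. cfg p n"
proof -
  obtain w m where w: "wk w m" "w 0 = b" "w m = c" using conn by blast
  define p where "p t = (if t = 0 then a else if t \<le> Suc m then w (t - 1) else e)" for t
  have "wk p (Suc (Suc m))"
    unfolding wk_def
  proof (intro allI impI)
    fix t assume t: "t < Suc (Suc m)"
    show "p t \<noteq> p (Suc t) \<and> C (p t) (p (Suc t)) \<noteq> 0"
    proof (cases "t = 0")
      case True then show ?thesis using assms(1) w by (auto simp: p_def mulg_def)
    next
      case False
      show ?thesis
      proof (cases "t = Suc m")
        case True then show ?thesis using assms(2) w by (auto simp: p_def mulg_def)
      next
        case False
        with \<open>t \<noteq> 0\<close> t have a: "t - 1 < m" "Suc (t - 1) = t" "t \<le> Suc m" "Suc t \<le> Suc m" by auto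
        have "p t = w (t - 1)" "p (Suc t) = w t" using a \<open>t \<noteq> 0\<close> by (auto simp: p_def)
        moreover have "w (t - 1) \<noteq> w (Suc (t - 1)) \<and> C (w (t - 1)) (w (Suc (t - 1))) \<noteq> 0"
          using w(1) a(1) unfolding wk_def by blast
        ultimately show ?thesis using a(2) by simp
      qed
    qed
  qed
  moreover have "p 0 = a" "p 1 = b" "p (Suc (Suc m) - 1) = c" "p (Suc (Suc m)) = e"
    using w by (auto simp: p_def)
  ultimately have "cfg p (Suc (Suc m))" using assms by (simp add: cfg_def)
  thus ?thesis by blast
qed

lemma shortcut:
  assumes cf: "cfg p n" and ij: "i < j" "j \<le> n" "p i = p j"
  shows "\<exists>p' n'. cfg p' n' \<and> n' < n"
proof -
  have n2: "2 \<le> n" and wkp: "\<And>t. t < n \<Longrightarrow> p t \<noteq> p (Suc t) \<and> C (p t) (p (Suc t)) \<noteq> 0"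
    and m0: "mulg (p 0) (p 1)" and mn: "mulg (p (n - 1)) (p n)" and ed: "{p 0, p 1} \<noteq> {p (n - 1), p n}"
    using cf by (auto simp: cfg_def wk_def)
  have Cs: "C (p (Suc t)) (p t) \<noteq> 0" if "t < n" for t using wkp[OF that] zs[OF sc] by metis
  show ?thesis
  proof (cases "i = 0")
    case i0: True
    show ?thesis
    proof (cases "j = n")
      case True
      have "n \<noteq> 2"
      proof
        assume "n = 2"
        hence "{p 0, p 1} = {p (n - 1), p n}" using i0 True ij by (auto simp: numeral_2_eq_2)
        thus False using ed by simp
      qed
      hence n3: "3 \<le> n" using n2 by simp
      define p' where "p' t = (if t = 0 then p (n - 1) else p (t - 1))" for t
      have "wk p' 2"
        unfolding wk_def p'_def using wkp[of "n - 1"] wkp[of 0] n3 ij i0 True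
        by (auto simp: less_2_cases_iff)
      moreover have "mulg (p' 0) (p' 1)" using mn ij i0 True n3 by (simp add: p'_def)
      moreover have "mulg (p' (2 - 1)) (p' 2)" using m0 by (simp add: p'_def numeral_2_eq_2)
      moreover have "{p' 0, p' 1} \<noteq> {p' (2 - 1), p' 2}"
        using ed ij i0 True by (auto simp: p'_def numeral_2_eq_2 insert_commute)
      ultimately have "cfg p' 2" by (simp add: cfg_def)
      moreover have "(2::nat) < n" using n3 by simp
      ultimately show ?thesis by blast
    next
      case False
      hence jn: "j < n" using ij by simp
      have "j \<noteq> 1" using wkp[of 0] ij i0 n2 by auto
      hence j2: "2 \<le> j" using ij i0 by linarith
      define p' where "p' t = (if t = 0 then p 1 else p (t + j - 1))" for t
      define n' where "n' = n - j + 1"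
      have "wk p' n'"
        unfolding wk_def
      proof (intro allI impI)
        fix t assume t: "t < n'"
        show "p' t \<noteq> p' (Suc t) \<and> C (p' t) (p' (Suc t)) \<noteq> 0"
        proof (cases "t = 0")
          case True
          then show ?thesis using wkp[of 0] Cs[of 0] ij i0 j2 n2 by (auto simp: p'_def)
        next
          case False
          have "t + j - 1 < n" "Suc (t + j - 1) = Suc t + j - 1" using t False j2 by (auto simp: n'_def)
          then show ?thesis using wkp[of "t + j - 1"] False by (simp add: p'_def)
        qed
      qed
      moreover have "mulg (p' 0) (p' 1)" using mulg_sym[OF m0] ij i0 j2 by (simp add: p'_def)
      moreover have "p' (n' - 1) = p (n - 1)" "p' n' = p n"
      proof -
        have "n' - 1 \<noteq> 0" "n' - 1 + j - 1 = n - 1" "n' \<noteq> 0" "n' + j - 1 = n" using jn j2 by (auto simp: n'_def)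
        thus "p' (n' - 1) = p (n - 1)" "p' n' = p n" unfolding p'_def by simp_all
      qed
      moreover have "p' 0 = p 1" "p' 1 = p 0" using ij i0 j2 by (auto simp: p'_def)
      moreover have "2 \<le> n'" "n' < n" using jn j2 by (auto simp: n'_def)
      ultimately have "cfg p' n'" using mn ed by (auto simp: cfg_def insert_commute)
      thus ?thesis using \<open>n' < n\<close> by blast
    qed
  next
    case i1: False
    show ?thesis
    proof (cases "j = n")
      case jn: True
      have i2: "i + 2 \<le> n"
      proof (rule ccontr)
        assume "\<not> ?thesis"
        hence "i = n - 1" using ij jn by simp
        thus False using wkp[of "n - 1"] ij jn n2 by simp
      qed
      define p' where "p' t = (if t \<le> i then p t else p (n - 1))" for t
      have "wk p' (Suc i)"
        unfolding wk_def
      proof (intro allI impI)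
        fix t assume t: "t < Suc i"
        show "p' t \<noteq> p' (Suc t) \<and> C (p' t) (p' (Suc t)) \<noteq> 0"
        proof (cases "t = i")
          case True
          then show ?thesis using wkp[of "n - 1"] Cs[of "n - 1"] ij jn n2 by (auto simp: p'_def)
        next
          case False
          then show ?thesis using wkp[of t] t i2 by (simp add: p'_def)
        qed
      qed
      moreover have "p' 0 = p 0" "p' 1 = p 1" "p' (Suc i - 1) = p n" "p' (Suc i) = p (n - 1)"
        using i1 ij jn by (auto simp: p'_def)
      moreover have "{p n, p (n - 1)} = {p (n - 1), p n}" by auto
      ultimately have "cfg p' (Suc i)" using m0 mulg_sym[OF mn] ed i1 i2
        by (auto simp: cfg_def)
      moreover have "Suc i < n" using i2 by simp
      ultimately show ?thesis by blast
    next
      case False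
      hence jn: "j < n" using ij by simp
      define k where "k = j - i"
      define p' where "p' t = (if t \<le> i then p t else p (t + k))" for t
      define n' where "n' = n - k"
      have k0: "0 < k" "i + k = j" using ij by (auto simp: k_def)
      have "wk p' n'"
        unfolding wk_def
      proof (intro allI impI)
        fix t assume t: "t < n'"
        show "p' t \<noteq> p' (Suc t) \<and> C (p' t) (p' (Suc t)) \<noteq> 0"
        proof (cases "t < i")
          case True
          then show ?thesis using wkp[of t] jn ij by (simp add: p'_def)
        next
          case False
          have a: "t + k < n" using t jn k0 by (auto simp: n'_def)
          show ?thesis
          proof (cases "t = i")
            case True
            then show ?thesis using wkp[of j] jn k0 ij by (simp add: p'_def)
          next
            case False
            then show ?thesis using wkp[of "t + k"] a \<open>\<not> t < i\<close> by (simp add: p'_def)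
          qed
        qed
      qed
      moreover have "p' 0 = p 0" "p' 1 = p 1" using i1 by (auto simp: p'_def)
      moreover have "p' n' = p n" using jn k0 by (auto simp: p'_def n'_def)
      moreover have "p' (n' - 1) = p (n - 1)"
      proof (cases "n' - 1 \<le> i")
        case True
        hence "n' - 1 = i" "n - 1 = j" using jn k0 by (auto simp: n'_def)
        thus ?thesis using ij by (simp add: p'_def)
      next
        case False
        thus ?thesis using jn k0 by (auto simp: p'_def n'_def)
      qed
      moreover have "2 \<le> n'" "n' < n" using i1 jn k0 by (auto simp: n'_def)
      ultimately have "cfg p' n'" using m0 mn ed by (auto simp: cfg_def)
      thus ?thesis using \<open>n' < n\<close> by blast
    qed
  qed
qed

lemma no_two:
  assumes "mulg a b" "mulg c e" shows "{a, b} = {c, e}"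
proof (rule ccontr)
  assume ne: "{a, b} \<noteq> {c, e}"
  have ex: "\<exists>n p. cfg p n" using cfg_exists[OF assms ne] by blast
  define n where "n = (LEAST n. \<exists>p. cfg p n)"
  obtain p where cf: "cfg p n" using LeastI_ex[OF ex] unfolding n_def by blast
  have minl: "n \<le> n'" if "cfg p' n'" for p' n' unfolding n_def by (rule Least_le) (use that in blast)
  have n2: "2 \<le> n" and wkp: "\<And>t. t < n \<Longrightarrow> p t \<noteq> p (Suc t) \<and> C (p t) (p (Suc t)) \<noteq> 0"
    and m0: "mulg (p 0) (p 1)" and mn: "mulg (p (n - 1)) (p n)"
    using cf by (auto simp: cfg_def wk_def)
  have inj: "inj_on p {..n}"
  proof (rule ccontr)
    assume "\<not> inj_on p {..n}"
    then obtain x y where xy: "x \<le> n" "y \<le> n" "x \<noteq> y" "p x = p y" unfolding inj_on_def by auto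
    have "\<exists>i j. i < j \<and> j \<le> n \<and> p i = p j"
    proof (cases "x < y")
      case True then show ?thesis using xy by blast
    next
      case False then show ?thesis using xy by (intro exI[of _ y] exI[of _ x]) auto
    qed
    then obtain i j where "i < j" "j \<le> n" "p i = p j" by blast
    from shortcut[OF cf this] obtain p' n' where "cfg p' n'" "n' < n" by blast
    with minl show False by fastforce
  qed
  have simp_int: "d (p t) = d (p (Suc t))" if "1 \<le> t" "t + 2 \<le> n" for t
  proof (rule ccontr)
    assume dd: "d (p t) \<noteq> d (p (Suc t))"
    have "wk p (Suc t)" using wkp that by (auto simp: wk_def)
    moreover have "mulg (p t) (p (Suc t))" using dd wkp[of t] that by (simp add: mulg_def)
    moreover have "p (Suc t) \<noteq> p 0" "p (Suc t) \<noteq> p 1"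
      using inj that by (auto dest: inj_onD)
    ultimately have "cfg p (Suc t)" using m0 that by (auto simp: cfg_def doubleton_eq_iff)
    with minl[of p "Suc t"] that show False by simp
  qed
  obtain m where nm: "n = Suc (Suc m)" using n2 by (metis add_2_eq_Suc le_Suc_ex)
  show False
  proof (rule path_cert[OF sc, of p m])
    show "inj_on p {..Suc (Suc m)}" using inj nm by simp
    show "C (p t) (p (Suc t)) \<noteq> 0" if "t < Suc (Suc m)" for t using wkp[of t] that nm by simp
    show "d (p 0) \<noteq> d (p 1)" using m0 by (simp add: mulg_def)
    show "d (p (Suc m)) \<noteq> d (p (Suc (Suc m)))" using mn nm by (simp add: mulg_def)
    show "d (p t) = d (p (Suc t))" if "1 \<le> t" "t + 2 \<le> Suc (Suc m)" for t using simp_int that nm by simp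
  qed
qed

end


lemma cartan_structure:
  fixes C :: "'i::finite \<Rightarrow> 'i \<Rightarrow> int" and d :: "'i \<Rightarrow> nat"
  assumes sc: "simple_cartan C d" and ki: "C k i < -1"
  shows "\<forall>v. d v = 1 \<or> d v = lacing d" "lacing d = 2 \<or> lacing d = 3" "d i = lacing d"
proof -
  have kin: "k \<noteq> i" using ki diag[OF sc, of i] by auto
  have cik: "C i k \<le> -1"
  proof -
    have "C i k \<noteq> 0" using zs[OF sc, of i k] ki by auto
    moreover have "C i k \<le> 0" using offd[OF sc] kin by auto
    ultimately show ?thesis by linarith
  qed
  have pr: "C k i * C i k < 4" using prod4[OF sc kin] .
  have cik1: "C i k = -1"
  proof (rule ccontr)
    assume "C i k \<noteq> -1"
    hence "C i k \<le> -2" using cik by linarith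
    hence "2 * 2 \<le> (- C k i) * (- C i k)" using ki by (intro mult_mono) auto
    thus False using pr by simp
  qed
  have ck3: "C k i \<ge> -3" using pr cik1 by simp
  define r where "r = nat (- C k i)"
  have r23: "r = 2 \<or> r = 3" using ki ck3 by (auto simp: r_def)
  have "int (d k) * C k i = int (d i) * C i k" using sym[OF sc] .
  hence "int (d i) = int (d k) * int r" using cik1 ki by (simp add: r_def)
  hence di: "d i = d k * r" by (metis of_nat_mult of_nat_eq_iff)
  have dk0: "0 < d k" using dpos[OF sc] .
  have mki: "mulg C d k i" using ki di dk0 r23 unfolding mulg_def[OF sc] by auto
  have vals0: "d v = d k \<or> d v = d i" for v
  proof -
    define J where "J = {v. d v = d k \<or> d v = d i}"
    have "J = UNIV"
    proof (rule ccontr)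
      assume nU: "J \<noteq> UNIV"
      have cc: "\<forall>J :: 'i set. J \<noteq> {} \<and> J \<noteq> UNIV \<longrightarrow> (\<exists>j\<in>J. \<exists>k. k \<notin> J \<and> C j k \<noteq> 0)"
        using sc unfolding simple_cartan_def by (elim conjE) assumption
      have "k \<in> J" by (simp add: J_def)
      then obtain j l where jl: "j \<in> J" "l \<notin> J" "C j l \<noteq> 0" using cc[rule_format, of J] nU by blast
      have "d j \<noteq> d l" using jl by (auto simp: J_def)
      hence "mulg C d j l" using jl by (simp add: mulg_def[OF sc])
      hence "{j, l} = {k, i}" using no_two[OF sc _ mki] by blast
      hence "l \<in> J" by (auto simp: J_def doubleton_eq_iff)
      thus False using jl by simp
    qed
    thus ?thesis by (auto simp: J_def)
  qed
  have "d k dvd Gcd (range d)"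
  proof (rule Gcd_greatest)
    fix b assume "b \<in> range d"
    then obtain v where "b = d v" by auto
    thus "d k dvd b" using vals0[of v] di by auto
  qed
  moreover have "Gcd (range d) = 1" using sc by (simp add: simple_cartan_def)
  ultimately have dk1: "d k = 1" by simp
  have lac: "lacing d = d i"
    unfolding lacing_def
  proof (rule Max_eqI)
    show "y \<le> d i" if yr: "y \<in> range d" for y
    proof -
      obtain v where "y = d v" using yr by auto
      thus ?thesis using vals0[of v] di dk1 r23 by auto
    qed
  qed auto
  show "\<forall>v. d v = 1 \<or> d v = lacing d" using vals0 dk1 lac by auto
  show "lacing d = 2 \<or> lacing d = 3" using lac di dk1 r23 by simp
  show "d i = lacing d" using lac by simp
qed

theorem mainTheorem2:
  fixes C :: "'i::finite \<Rightarrow> 'i \<Rightarrow> int" and d :: "'i \<Rightarrow> nat" and q :: complex and i :: 'i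
  assumes "simple_cartan C d"
    and "q \<noteq> 0" and "\<forall>n::nat. 0 < n \<longrightarrow> q ^ n \<noteq> 1"
    and "\<exists>k. C k i < -1"
  shows "\<forall>w \<in> weyl_group C. \<forall>ws. reduced_decomp C w ws \<longrightarrow>
           laurent_in_W d q (chariT_word C d q ws (Yv i 1))"
proof (intro ballI allI impI)
  fix w ws
  obtain k where ki: "C k i < -1" using assms(4) by blast
  note st = cartan_structure[OF assms(1) ki]
  have "Wv d q i 1 = Yv i 1" using st(3) by (simp add: Wv_def)
  hence y: "Yv i 1 \<in> LW d q" using LW_Wv by metis
  have "chariT_word C d q ws (Yv i 1) \<in> LW d q"
  proof (rule word_closed[OF refl assms(2) st(1) st(2) _ _ _ _ _ y])
    show "\<forall>v. C v v = 2" using diag[OF assms(1)] by blast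
    show "\<forall>u v. u \<noteq> v \<longrightarrow> C u v \<le> 0" using offd[OF assms(1)] by blast
    show "\<forall>u v. (C u v = 0) = (C v u = 0)" using zs[OF assms(1)] by blast
    show "\<forall>u v. int (d u) * C u v = int (d v) * C v u" using sym[OF assms(1)] by blast
    show "\<forall>u v. u \<noteq> v \<longrightarrow> C u v * C v u < 4" using prod4[OF assms(1)] by blast
  qed
  thus "laurent_in_W d q (chariT_word C d q ws (Yv i 1))" by (simp add: LW_def)
qed

end
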